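(* Let $(G_n)_{n\in\mathbb N}$ be a sequence of groups. If $g\in\circledast_nG_n$ has finite order, then $g$ is conjugate in $\circledast_nG_n$ to an element of some factor $G_i$.
   Context: For a sequence of groups $(G_n)_{n\in\mathbb N}$, an infinite word is a map $w:L\to\bigsqcup_n (G_n\setminus\{1\})$ from a countable linearly ordered set $L$ such that $w^{-1}(G_n)$ is finite for every $n$. Two infinite words are equivalent if for every $m$ their restrictions to the letters from $G_1,\dots,G_m$ represent the same element of $G_1*\cdots*G_m$. The topologist's product $\circledast_n G_n$ is the group of equivalence classes, with multiplication induced by concatenation and inversion by reversing the order and inverting each letter; each $G_i$ is a subgroup (one-letter words). *)

theory Defs
  imports Complex_Main "HOL-Algebra.Group"
begin

text \<open>Letters are pairs (n, x) with x a non-identity element of G n (disjoint union).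
  An infinite word is represented by a set of positions D, a subset of the rationals
  (every countable linear order embeds into the rationals), together with a labelling
  function w.\<close>

type_synonym 'a letter = "nat \<times> 'a"
type_synonym 'a iword = "rat set \<times> (rat \<Rightarrow> 'a letter)"

definition is_letter :: "(nat \<Rightarrow> 'a monoid) \<Rightarrow> 'a letter \<Rightarrow> bool" where
  "is_letter G l \<longleftrightarrow> snd l \<in> carrier (G (fst l)) \<and> snd l \<noteq> \<one>\<^bsub>G (fst l)\<^esub>"

definition is_iword :: "(nat \<Rightarrow> 'a monoid) \<Rightarrow> 'a iword \<Rightarrow> bool" where
  "is_iword G W \<longleftrightarrow> (\<forall>q\<in>fst W. is_letter G (snd W q))
      \<and> (\<forall>n. finite {q \<in> fst W. fst (snd W q) = n})"

definition proj :: "nat \<Rightarrow> 'a iword \<Rightarrow> 'a letter list" where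
  "proj m W = map (snd W) (sorted_list_of_set {q \<in> fst W. fst (snd W q) \<le> m})"

definition fp_step :: "(nat \<Rightarrow> 'a monoid) \<Rightarrow> 'a letter list \<Rightarrow> 'a letter list \<Rightarrow> bool" where
  "fp_step G xs ys \<longleftrightarrow> (\<exists>u v n x y. xs = u @ [(n, x), (n, y)] @ v \<and>
      (if x \<otimes>\<^bsub>G n\<^esub> y = \<one>\<^bsub>G n\<^esub> then ys = u @ v
       else ys = u @ [(n, x \<otimes>\<^bsub>G n\<^esub> y)] @ v))"

definition fp_eq :: "(nat \<Rightarrow> 'a monoid) \<Rightarrow> 'a letter list \<Rightarrow> 'a letter list \<Rightarrow> bool" where
  "fp_eq G = (\<lambda>xs ys. fp_step G xs ys \<or> fp_step G ys xs)\<^sup>*\<^sup>*"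

definition word_equiv :: "(nat \<Rightarrow> 'a monoid) \<Rightarrow> ('a iword \<times> 'a iword) set" where
  "word_equiv G = {(W, V). is_iword G W \<and> is_iword G V \<and> (\<forall>m. fp_eq G (proj m W) (proj m V))}"

text \<open>Order embedding of the rationals into the open interval (-1,1).\<close>
definition squash :: "rat \<Rightarrow> rat" where
  "squash q = q / (1 + \<bar>q\<bar>)"

definition concat_word :: "'a iword \<Rightarrow> 'a iword \<Rightarrow> 'a iword" where
  "concat_word W V =
     ((\<lambda>q. squash q - 1) ` fst W \<union> (\<lambda>q. squash q + 1) ` fst V,
      \<lambda>r. if r < 0 then snd W (the_inv squash (r + 1)) else snd V (the_inv squash (r - 1)))"

definition empty_word :: "'a iword" where
  "empty_word = ({}, \<lambda>_. undefined)"

definition topprod :: "(nat \<Rightarrow> 'a monoid) \<Rightarrow> 'a iword set monoid" where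
  "topprod G = \<lparr> carrier = {word_equiv G `` {W} | W. is_iword G W},
     mult = (\<lambda>A B. word_equiv G `` {concat_word (SOME W. W \<in> A) (SOME V. V \<in> B)}),
     one = word_equiv G `` {empty_word} \<rparr>"

definition factor_incl :: "(nat \<Rightarrow> 'a monoid) \<Rightarrow> nat \<Rightarrow> 'a \<Rightarrow> 'a iword set" where
  "factor_incl G i a = (if a = \<one>\<^bsub>G i\<^esub> then \<one>\<^bsub>topprod G\<^esub>
      else word_equiv G `` {({0}, \<lambda>_. (i, a))})"

end

theory Submission
  imports Defs
begin


lemma fp_eq_refl[simp]: "fp_eq G xs xs"
  by (simp add: fp_eq_def)

lemma fp_eq_sym: "fp_eq G xs ys \<Longrightarrow> fp_eq G ys xs"
proof -
  have "symp (\<lambda>xs ys. fp_step G xs ys \<or> fp_step G ys xs)" by (auto simp: symp_def)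
  then show "fp_eq G xs ys \<Longrightarrow> fp_eq G ys xs" unfolding fp_eq_def
    by (meson symp_rtranclp sympD)
qed

lemma fp_eq_trans[trans]: "fp_eq G xs ys \<Longrightarrow> fp_eq G ys zs \<Longrightarrow> fp_eq G xs zs"
  unfolding fp_eq_def by (rule rtranclp_trans)

lemma fp_step_ctx: "fp_step G xs ys \<Longrightarrow> fp_step G (a @ xs @ b) (a @ ys @ b)"
  unfolding fp_step_def
  apply (elim exE conjE)
  subgoal for u v n x y
    apply (rule exI[of _ "a @ u"], rule exI[of _ "v @ b"], rule exI[of _ n], rule exI[of _ x], rule exI[of _ y])
    by (auto split: if_splits)
  done

lemma fp_eq_ctx: "fp_eq G xs ys \<Longrightarrow> fp_eq G (a @ xs @ b) (a @ ys @ b)"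
  unfolding fp_eq_def
proof (induction rule: rtranclp_induct)
  case base then show ?case by simp
next
  case (step y z)
  from step.hyps(2) have "fp_step G (a @ y @ b) (a @ z @ b) \<or> fp_step G (a @ z @ b) (a @ y @ b)"
    using fp_step_ctx by blast
  with step.IH show ?case by (rule rtranclp.rtrancl_into_rtrancl)
qed

lemma fp_eq_app: "fp_eq G xs ys \<Longrightarrow> fp_eq G xs' ys' \<Longrightarrow> fp_eq G (xs @ xs') (ys @ ys')"
proof -
  assume a: "fp_eq G xs ys" and b: "fp_eq G xs' ys'"
  have "fp_eq G ([] @ xs @ xs') ([] @ ys @ xs')" by (rule fp_eq_ctx[OF a])
  moreover have "fp_eq G (ys @ xs' @ []) (ys @ ys' @ [])" by (rule fp_eq_ctx[OF b])
  ultimately show ?thesis by (auto intro: fp_eq_trans)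
qed

lemma fp_eq_app_left: "fp_eq G xs ys \<Longrightarrow> fp_eq G (a @ xs) (a @ ys)"
  using fp_eq_app[of G a a xs ys] by simp

lemma fp_eq_app_right: "fp_eq G xs ys \<Longrightarrow> fp_eq G (xs @ b) (ys @ b)"
  using fp_eq_app[of G xs ys b b] by simp

lemma fp_eq_step_one: "fp_step G xs ys \<Longrightarrow> fp_eq G xs ys"
  unfolding fp_eq_def by auto

lemma e1: "x \<otimes>\<^bsub>G n\<^esub> y = \<one>\<^bsub>G n\<^esub> \<Longrightarrow> fp_eq G [(n,x),(n,y)] []"
  apply (rule fp_eq_step_one) unfolding fp_step_def
  by (rule exI[of _ "[]"], rule exI[of _ "[]"], auto)

lemma e2: "x \<otimes>\<^bsub>G n\<^esub> y \<noteq> \<one>\<^bsub>G n\<^esub> \<Longrightarrow> fp_eq G [(n,x),(n,y)] [(n, x \<otimes>\<^bsub>G n\<^esub> y)]"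
  apply (rule fp_eq_step_one) unfolding fp_step_def
  by (rule exI[of _ "[]"], rule exI[of _ "[]"], auto)

section \<open>States\<close>

type_synonym 'a state = "(nat \<times> 'a letter list) list"

fun alt :: "(nat \<times> 'b) list \<Rightarrow> bool" where
  "alt [] = True"
| "alt [_] = True"
| "alt (a # b # s) = (fst a \<noteq> fst b \<and> alt (b # s))"

lemma alt_Cons: "alt (a # s) \<longleftrightarrow> alt s \<and> (s = [] \<or> fst a \<noteq> fst (hd s))"
  by (cases s) auto

lemma alt_append: "alt (xs @ ys) \<longleftrightarrow> alt xs \<and> alt ys \<and> (xs = [] \<or> ys = [] \<or> fst (last xs) \<noteq> fst (hd ys))"
  by (induction xs) (auto simp: alt_Cons)

definition act :: "(nat \<Rightarrow> 'a monoid) \<Rightarrow> 'a letter \<Rightarrow> 'a state \<Rightarrow> 'a state" where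
  "act G l s = (case s of [] \<Rightarrow> (if fp_eq G [l] [] then [] else [(fst l,[l])])
     | (k,b) # s' \<Rightarrow> (if k = fst l then (if fp_eq G (b @ [l]) [] then s' else (k, b @ [l]) # s')
                    else (if fp_eq G [l] [] then s else (fst l,[l]) # s)))"

definition sim :: "(nat \<Rightarrow> 'a monoid) \<Rightarrow> 'a state \<Rightarrow> 'a state \<Rightarrow> bool" where
  "sim G = list_all2 (\<lambda>(k,b) (k',b'). k = k' \<and> fp_eq G b b')"

definition VS :: "(nat \<Rightarrow> 'a monoid) \<Rightarrow> 'a state \<Rightarrow> bool" where
  "VS G s \<longleftrightarrow> alt s \<and> (\<forall>(k,b)\<in>set s. (\<forall>l\<in>set b. fst l = k) \<and> \<not> fp_eq G b [])"

lemma sim_refl[simp]: "sim G s s"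
  unfolding sim_def by (induction s) auto

lemma sim_sym: "sim G s t \<Longrightarrow> sim G t s"
  unfolding sim_def
  by (induction rule: list_all2_induct) (auto intro: fp_eq_sym)

lemma sim_trans: "sim G s t \<Longrightarrow> sim G t u \<Longrightarrow> sim G s u"
  unfolding sim_def
proof (induction s t arbitrary: u rule: list_all2_induct)
  case Nil then show ?case by simp
next
  case (Cons x xs y ys)
  then show ?case
    by (cases u) (auto intro: fp_eq_trans)
qed

lemma sim_length: "sim G s t \<Longrightarrow> length s = length t"
  unfolding sim_def by (rule list_all2_lengthD)

lemma sim_Cons: "sim G ((k,b)#s) ((k',b')#t) \<longleftrightarrow> k = k' \<and> fp_eq G b b' \<and> sim G s t"
  unfolding sim_def by auto

lemma sim_Nil1[simp]: "sim G [] t \<longleftrightarrow> t = []" and sim_Nil2[simp]: "sim G t [] \<longleftrightarrow> t = []"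
  unfolding sim_def by auto

lemma sim_Cons_ex: "sim G ((k,b)#s) t \<longleftrightarrow> (\<exists>b' t'. t = (k,b')#t' \<and> fp_eq G b b' \<and> sim G s t')"
  by (cases t) (auto simp: sim_Cons)

lemma act_sim: "sim G s t \<Longrightarrow> sim G (act G l s) (act G l t)"
proof (cases s)
  case Nil
  assume "sim G s t" then show ?thesis using Nil by simp
next
  case (Cons a s')
  assume st: "sim G s t"
  obtain k b where a: "a = (k,b)" by (cases a)
  with st Cons obtain b' t' where t: "t = (k,b')#t'" and bb: "fp_eq G b b'" and s't': "sim G s' t'"
    by (auto simp: sim_Cons_ex)
  have iff: "fp_eq G (b @ [l]) [] \<longleftrightarrow> fp_eq G (b' @ [l]) []"
    using fp_eq_app_right[OF bb, of "[l]"] fp_eq_app_right[OF fp_eq_sym[OF bb], of "[l]"]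
    by (meson fp_eq_sym fp_eq_trans)
  show ?thesis using Cons a t st s't' iff fp_eq_app_right[OF bb, of "[l]"]
    by (auto simp: act_def sim_Cons)
qed

lemma fold_act_sim: "sim G s t \<Longrightarrow> sim G (fold (act G) xs s) (fold (act G) xs t)"
  by (induction xs arbitrary: s t) (auto intro: act_sim)

lemma VS_act: "VS G s \<Longrightarrow> VS G (act G l s)"
proof (cases s)
  case Nil
  assume "VS G s" then show ?thesis using Nil by (auto simp: act_def VS_def)
next
  case (Cons a s')
  assume v: "VS G s"
  obtain k b where a: "a = (k,b)" by (cases a)
  have vs': "VS G s'" using v Cons by (auto simp: VS_def alt_Cons)
  show ?thesis
    using v vs' Cons a by (auto simp: act_def VS_def alt_Cons)
qed

lemma VS_fold: "VS G s \<Longrightarrow> VS G (fold (act G) xs s)"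
  by (induction xs arbitrary: s) (auto intro: VS_act)



lemma fp_eq_iff_trans: "fp_eq G a b \<Longrightarrow> fp_eq G a c \<longleftrightarrow> fp_eq G b c"
  by (meson fp_eq_sym fp_eq_trans)

lemma act_Cons_same: "act G (n,x) ((n,b)#s) = (if fp_eq G (b @ [(n,x)]) [] then s else (n, b @ [(n,x)]) # s)"
  by (simp add: act_def)

lemma act_other: "s = [] \<or> fst (hd s) \<noteq> n \<Longrightarrow> act G (n,x) s = (if fp_eq G [(n,x)] [] then s else (n,[(n,x)]) # s)"
  by (cases s) (auto simp: act_def split: prod.splits)

lemma dact:
  assumes v: "VS G s"
  shows "sim G (act G (n,y) (act G (n,x) s)) (if x \<otimes>\<^bsub>G n\<^esub> y = \<one>\<^bsub>G n\<^esub> then s else act G (n, x \<otimes>\<^bsub>G n\<^esub> y) s)"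
proof -
  have h1: "fp_eq G (b @ [(n,x)] @ [(n,y)]) b" if "x \<otimes>\<^bsub>G n\<^esub> y = \<one>\<^bsub>G n\<^esub>" for b
    using fp_eq_app_left[OF e1[of G n x y, OF that], of b] by simp
  have h2: "fp_eq G (b @ [(n,x)] @ [(n,y)]) (b @ [(n, x \<otimes>\<^bsub>G n\<^esub> y)])" if "x \<otimes>\<^bsub>G n\<^esub> y \<noteq> \<one>\<^bsub>G n\<^esub>" for b
    using fp_eq_app_left[OF e2[of G n x y, OF that], of b] by simp
  show ?thesis
  proof (cases "s \<noteq> [] \<and> fst (hd s) = n")
    case True
    then obtain b s' where s: "s = (n,b)#s'" by (cases s) auto
    have s': "s' = [] \<or> fst (hd s') \<noteq> n" using v s by (cases s') (auto simp: VS_def)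
    have bnt: "\<not> fp_eq G b []" using v s by (auto simp: VS_def)
    show ?thesis
    proof (cases "fp_eq G (b @ [(n,x)]) []")
      case A1: True
      have yb: "fp_eq G (b @ [(n,x)] @ [(n,y)]) [(n,y)]"
        using fp_eq_app_right[OF A1, of "[(n,y)]"] by simp
      have L: "act G (n,y) (act G (n,x) s) = (if fp_eq G [(n,y)] [] then s' else (n,[(n,y)]) # s')"
        using A1 s s' by (simp add: act_Cons_same act_other)
      show ?thesis
      proof (cases "x \<otimes>\<^bsub>G n\<^esub> y = \<one>\<^bsub>G n\<^esub>")
        case True
        have "fp_eq G [(n,y)] b" using h1[OF True, of b] yb by (meson fp_eq_iff_trans)
        then have "\<not> fp_eq G [(n,y)] []" using bnt by (meson fp_eq_iff_trans)
        then show ?thesis using L True s \<open>fp_eq G [(n,y)] b\<close> by (simp add: sim_Cons fp_eq_sym)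
      next
        case False
        have e: "fp_eq G (b @ [(n, x \<otimes>\<^bsub>G n\<^esub> y)]) [(n,y)]"
          using h2[OF False, of b] yb by (meson fp_eq_iff_trans)
        then have "fp_eq G (b @ [(n, x \<otimes>\<^bsub>G n\<^esub> y)]) [] \<longleftrightarrow> fp_eq G [(n,y)] []"
          by (rule fp_eq_iff_trans)
        then show ?thesis using L False s e by (auto simp: act_Cons_same sim_Cons fp_eq_sym)
      qed
    next
      case A2: False
      have L: "act G (n,y) (act G (n,x) s) = (if fp_eq G (b @ [(n,x)] @ [(n,y)]) [] then s' else (n,b @ [(n,x)] @ [(n,y)]) # s')"
        using A2 s by (simp add: act_Cons_same)
      show ?thesis
      proof (cases "x \<otimes>\<^bsub>G n\<^esub> y = \<one>\<^bsub>G n\<^esub>")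
        case True
        have "\<not> fp_eq G (b @ [(n,x)] @ [(n,y)]) []" using h1[OF True, of b] bnt by (meson fp_eq_iff_trans)
        then show ?thesis using L True s h1[OF True, of b] by (simp add: sim_Cons)
      next
        case False
        then have "fp_eq G (b @ [(n,x)] @ [(n,y)]) [] \<longleftrightarrow> fp_eq G (b @ [(n, x \<otimes>\<^bsub>G n\<^esub> y)]) []"
          using h2 by (meson fp_eq_iff_trans)
        then show ?thesis using L False s h2[OF False, of b] by (auto simp: act_Cons_same sim_Cons)
      qed
    qed
  next
    case False
    then have s: "s = [] \<or> fst (hd s) \<noteq> n" by auto
    show ?thesis
    proof (cases "fp_eq G [(n,x)] []")
      case B1: True
      have yb: "fp_eq G ([(n,x)] @ [(n,y)]) [(n,y)]"
        using fp_eq_app_right[OF B1, of "[(n,y)]"] by simp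
      have L: "act G (n,y) (act G (n,x) s) = (if fp_eq G [(n,y)] [] then s else (n,[(n,y)]) # s)"
        using B1 s by (simp add: act_other)
      show ?thesis
      proof (cases "x \<otimes>\<^bsub>G n\<^esub> y = \<one>\<^bsub>G n\<^esub>")
        case True
        have "fp_eq G [(n,y)] []" using e1[of G n x y, OF True] yb by (simp, meson fp_eq_iff_trans)
        then show ?thesis using L True by simp
      next
        case False
        have e: "fp_eq G [(n, x \<otimes>\<^bsub>G n\<^esub> y)] [(n,y)]"
          using e2[of G n x y, OF False] yb by (simp, meson fp_eq_iff_trans fp_eq_sym)
        then have "fp_eq G [(n, x \<otimes>\<^bsub>G n\<^esub> y)] [] \<longleftrightarrow> fp_eq G [(n,y)] []"
          by (rule fp_eq_iff_trans)
        then show ?thesis using L False s e by (auto simp: act_other sim_Cons fp_eq_sym)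
      qed
    next
      case B2: False
      have L: "act G (n,y) (act G (n,x) s) = (if fp_eq G ([(n,x)] @ [(n,y)]) [] then s else (n,[(n,x)] @ [(n,y)]) # s)"
        using B2 s by (simp add: act_other act_Cons_same)
      show ?thesis
      proof (cases "x \<otimes>\<^bsub>G n\<^esub> y = \<one>\<^bsub>G n\<^esub>")
        case True
        then show ?thesis using L e1[of G n x y, OF True] by simp
      next
        case False
        have e: "fp_eq G [(n,x),(n,y)] [(n, x \<otimes>\<^bsub>G n\<^esub> y)]" by (rule e2[of G n x y, OF False])
        then have "fp_eq G [(n,x),(n,y)] [] \<longleftrightarrow> fp_eq G [(n, x \<otimes>\<^bsub>G n\<^esub> y)] []"
          by (rule fp_eq_iff_trans)
        then show ?thesis using L False s e by (auto simp: act_other sim_Cons)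
      qed
    qed
  qed
qed

lemma step_fold_sim:
  assumes st: "fp_step G xs ys" and v: "VS G s"
  shows "sim G (fold (act G) xs s) (fold (act G) ys s)"
proof -
  from st obtain u v n x y where xs: "xs = u @ [(n, x), (n, y)] @ v" and
    ys: "ys = (if x \<otimes>\<^bsub>G n\<^esub> y = \<one>\<^bsub>G n\<^esub> then u @ v else u @ [(n, x \<otimes>\<^bsub>G n\<^esub> y)] @ v)"
    unfolding fp_step_def by (auto split: if_splits)
  let ?t = "fold (act G) u s"
  have vt: "VS G ?t" using v by (rule VS_fold)
  have "sim G (act G (n,y) (act G (n,x) ?t)) (fold (act G) ([(n, x \<otimes>\<^bsub>G n\<^esub> y)] ) ?t)"
    if "x \<otimes>\<^bsub>G n\<^esub> y \<noteq> \<one>\<^bsub>G n\<^esub>" using dact[OF vt, of n y x] that by simp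
  moreover have "sim G (act G (n,y) (act G (n,x) ?t)) ?t"
    if "x \<otimes>\<^bsub>G n\<^esub> y = \<one>\<^bsub>G n\<^esub>" using dact[OF vt, of n y x] that by simp
  ultimately show ?thesis using xs ys fold_act_sim by (cases "x \<otimes>\<^bsub>G n\<^esub> y = \<one>\<^bsub>G n\<^esub>") auto
qed

lemma fp_eq_fold_sim:
  assumes "fp_eq G xs ys" and v: "VS G s"
  shows "sim G (fold (act G) xs s) (fold (act G) ys s)"
  using assms(1) unfolding fp_eq_def
proof (induction rule: rtranclp_induct)
  case base then show ?case by simp
next
  case (step y z)
  then show ?case using step_fold_sim[OF _ v] sim_trans sim_sym by blast
qed



definition rep :: "'a state \<Rightarrow> 'a letter list" where
  "rep s = concat (rev (map snd s))"

lemma rep_simps[simp]: "rep [] = []" "rep ((k,b)#s) = rep s @ b" "rep (xs @ ys) = rep ys @ rep xs"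
  by (auto simp: rep_def)

lemma act_rep: "fp_eq G (rep s @ [l]) (rep (act G l s))"
proof (cases s)
  case Nil then show ?thesis by (cases l) (auto simp: act_def)
next
  case (Cons a s')
  obtain k b where a: "a = (k,b)" by (cases a)
  have 1: "fp_eq G (rep s' @ b @ [l]) (rep s')" if "fp_eq G (b @ [l]) []"
    using fp_eq_app_left[OF that, of "rep s'"] by simp
  have 2: "fp_eq G (rep s @ [l]) (rep s)" if "fp_eq G [l] []"
    using fp_eq_app_left[OF that, of "rep s"] by simp
  show ?thesis using Cons a 1 2 by (auto simp: act_def)
qed

lemma fold_rep: "fp_eq G (rep s @ xs) (rep (fold (act G) xs s))"
proof (induction xs arbitrary: s)
  case Nil then show ?case by simp
next
  case (Cons l xs)
  have "fp_eq G (rep s @ [l] @ xs) (rep (act G l s) @ xs)"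
    using fp_eq_app_right[OF act_rep[of G s l], of xs] by simp
  then show ?case using Cons.IH[of "act G l s"] by (auto intro: fp_eq_trans)
qed

lemma rep_sim: "sim G s t \<Longrightarrow> fp_eq G (rep s) (rep t)"
  unfolding sim_def
proof (induction rule: list_all2_induct)
  case Nil then show ?case by simp
next
  case (Cons x xs y ys)
  then show ?case by (cases x; cases y) (auto intro: fp_eq_app)
qed

lemma VS_Nil[simp]: "VS G []" by (simp add: VS_def)

lemma VS_append: "VS G (xs @ ys) \<longleftrightarrow> VS G xs \<and> VS G ys \<and> (xs = [] \<or> ys = [] \<or> fst (last xs) \<noteq> fst (hd ys))"
  unfolding VS_def alt_append by auto

lemma VS_Cons: "VS G ((k,b) # s) \<longleftrightarrow> VS G s \<and> (\<forall>l\<in>set b. fst l = k) \<and> \<not> fp_eq G b [] \<and> (s = [] \<or> k \<noteq> fst (hd s))"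
  unfolding VS_def alt_Cons by auto

lemma single_block:
  assumes idx: "\<forall>l\<in>set b. fst l = n" and s: "s = [] \<or> fst (hd s) \<noteq> n"
  shows "sim G (fold (act G) b s) (if fp_eq G b [] then s else (n,b)#s)"
  using idx
proof (induction b rule: rev_induct)
  case Nil then show ?case by simp
next
  case (snoc l b)
  obtain x where l: "l = (n,x)" using snoc.prems by (cases l) auto
  have IH: "sim G (fold (act G) b s) (if fp_eq G b [] then s else (n,b)#s)"
    using snoc by auto
  have A1: "sim G (fold (act G) (b @ [l]) s) (act G l (if fp_eq G b [] then s else (n,b)#s))"
    using act_sim[OF IH] by simp
  have A2: "act G l (if fp_eq G b [] then s else (n,b)#s) = (if fp_eq G b [] then act G l s else (if fp_eq G (b @ [l]) [] then s else (n, b @ [l]) # s))"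
    using l by (simp add: act_Cons_same)
  have A3: "act G l s = (if fp_eq G [l] [] then s else (n,[l]) # s)"
    using l act_other[OF s] by simp
  have R: "sim G (fold (act G) (b @ [l]) s) (if fp_eq G b [] then (if fp_eq G [l] [] then s else (n,[l]) # s) else (if fp_eq G (b @ [l]) [] then s else (n, b @ [l]) # s))"
    using A1 unfolding A2 A3 .
  show ?case
  proof (cases "fp_eq G b []")
    case True
    have e: "fp_eq G (b @ [l]) [l]" using fp_eq_app_right[OF True, of "[l]"] by simp
    then have iff: "fp_eq G (b @ [l]) [] \<longleftrightarrow> fp_eq G [l] []" by (rule fp_eq_iff_trans)
    have "sim G ((n,[l]) # s) ((n, b @ [l]) # s)" using e by (simp add: sim_Cons fp_eq_sym)
    then show ?thesis using R True iff by (auto intro: sim_trans)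
  next
    case False
    then show ?thesis using R by simp
  qed
qed

lemma fold_rep_state:
  assumes "VS G T" and "T = [] \<or> s = [] \<or> fst (last T) \<noteq> fst (hd s)"
  shows "sim G (fold (act G) (rep T) s) (T @ s)"
  using assms
proof (induction T arbitrary: s rule: rev_induct)
  case Nil then show ?case by simp
next
  case (snoc a T)
  obtain n b where a: "a = (n,b)" by (cases a)
  have vT: "VS G T" and vb: "(\<forall>l\<in>set b. fst l = n)" "\<not> fp_eq G b []"
    and c: "T = [] \<or> fst (last T) \<noteq> n"
    using snoc.prems(1) a by (auto simp: VS_append VS_Cons)
  have s: "s = [] \<or> fst (hd s) \<noteq> n" using snoc.prems(2) a by auto
  have 1: "sim G (fold (act G) b s) ((n,b)#s)" using single_block[OF vb(1) s, of G] vb(2) by simp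
  have "sim G (fold (act G) (rep T) (fold (act G) b s)) (fold (act G) (rep T) ((n,b)#s))"
    by (rule fold_act_sim[OF 1])
  moreover have "sim G (fold (act G) (rep T) ((n,b)#s)) (T @ (n,b)#s)"
    using snoc.IH[OF vT] c by auto
  ultimately show ?case using a by (auto intro: sim_trans)
qed

definition wpow :: "nat \<Rightarrow> 'b list \<Rightarrow> 'b list" where
  "wpow k w = concat (replicate k w)"

lemma wpow_Suc: "wpow (Suc k) w = w @ wpow k w" by (simp add: wpow_def)
lemma wpow_Suc': "wpow (Suc k) w = wpow k w @ w"
  by (simp add: wpow_def replicate_append_same[symmetric] del: replicate_append_same)
lemma wpow_0[simp]: "wpow 0 w = []" by (simp add: wpow_def)

lemma wpow_fp_eq: "fp_eq G x y \<Longrightarrow> fp_eq G (wpow k x) (wpow k y)"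
  by (induction k) (auto simp: wpow_Suc intro: fp_eq_app)

lemma no_finite_order:
  assumes v: "VS G T" and ne: "T \<noteq> []" and d: "fst (hd T) \<noteq> fst (last T)" and k: "k > 0"
  shows "\<not> fp_eq G (wpow k (rep T)) []"
proof
  assume e: "fp_eq G (wpow k (rep T)) []"
  have P: "sim G (fold (act G) (wpow k (rep T)) []) (concat (replicate k T))" for k
  proof (induction k)
    case 0 then show ?case by (simp add: wpow_def)
  next
    case (Suc k)
    have "sim G (fold (act G) (wpow (Suc k) (rep T)) []) (fold (act G) (rep T) (concat (replicate k T)))"
      using fold_act_sim[OF Suc.IH] by (simp add: wpow_Suc')
    moreover have "sim G (fold (act G) (rep T) (concat (replicate k T))) (T @ concat (replicate k T))"
      apply (rule fold_rep_state[OF v])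
      using d ne by (cases k) auto
    ultimately show ?case by (auto intro: sim_trans)
  qed
  have "sim G (fold (act G) (wpow k (rep T)) []) (fold (act G) [] [])"
    by (rule fp_eq_fold_sim[OF e]) simp
  with P[of k] have "sim G (concat (replicate k T)) []" by (auto intro: sim_trans sim_sym)
  then show False using ne k by (cases k) auto
qed



definition invl :: "(nat \<Rightarrow> 'a monoid) \<Rightarrow> 'a letter \<Rightarrow> 'a letter" where
  "invl G l = (fst l, inv\<^bsub>G (fst l)\<^esub> (snd l))"

definition invw :: "(nat \<Rightarrow> 'a monoid) \<Rightarrow> 'a letter list \<Rightarrow> 'a letter list" where
  "invw G w = rev (map (invl G) w)"

lemma invw_simps[simp]: "invw G [] = []" "invw G (a @ b) = invw G b @ invw G a"
  "invw G (l # w) = invw G w @ [invl G l]"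
  by (auto simp: invw_def)

definition VW :: "(nat \<Rightarrow> 'a monoid) \<Rightarrow> 'a letter list \<Rightarrow> bool" where
  "VW G w \<longleftrightarrow> (\<forall>l\<in>set w. is_letter G l)"

lemma VW_simps[simp]: "VW G []" "VW G (a @ b) \<longleftrightarrow> VW G a \<and> VW G b" "VW G (l # w) \<longleftrightarrow> is_letter G l \<and> VW G w"
  by (auto simp: VW_def)

definition CV :: "(nat \<Rightarrow> 'a monoid) \<Rightarrow> 'a state \<Rightarrow> bool" where
  "CV G s \<longleftrightarrow> (\<forall>(k,b)\<in>set s. VW G b)"

lemma CV_simps[simp]: "CV G []" "CV G (xs @ ys) \<longleftrightarrow> CV G xs \<and> CV G ys" "CV G ((k,b)#s) \<longleftrightarrow> VW G b \<and> CV G s"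
  by (auto simp: CV_def)

lemma CV_act: "CV G s \<Longrightarrow> is_letter G l \<Longrightarrow> CV G (act G l s)"
  by (cases s) (auto simp: act_def CV_def VW_def)

lemma CV_fold: "CV G s \<Longrightarrow> VW G xs \<Longrightarrow> CV G (fold (act G) xs s)"
  by (induction xs arbitrary: s) (auto intro: CV_act)

lemma VW_rep: "CV G s \<Longrightarrow> VW G (rep s)"
  by (induction s) (auto simp: CV_def)

context
  fixes G :: "nat \<Rightarrow> 'a monoid"
  assumes grp: "\<And>n. group (G n)"
begin

lemma is_letter_invl: "is_letter G l \<Longrightarrow> is_letter G (invl G l)"
  using group.inv_closed[OF grp] group.inv_eq_1_iff[OF grp]
  by (auto simp: is_letter_def invl_def)

lemma VW_invw: "VW G w \<Longrightarrow> VW G (invw G w)"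
  by (auto simp: VW_def invw_def is_letter_invl)

lemma cancel_pair_r: "is_letter G l \<Longrightarrow> fp_eq G [l, invl G l] []"
  apply (cases l) apply (simp add: invl_def)
  by (rule e1) (auto simp: is_letter_def group.r_inv[OF grp])

lemma cancel_pair_l: "is_letter G l \<Longrightarrow> fp_eq G [invl G l, l] []"
  apply (cases l) apply (simp add: invl_def)
  by (rule e1) (auto simp: is_letter_def group.l_inv[OF grp])

lemma cancel_r: "VW G w \<Longrightarrow> fp_eq G (w @ invw G w) []"
proof (induction w)
  case Nil then show ?case by simp
next
  case (Cons l w)
  have "fp_eq G ([l] @ (w @ invw G w) @ [invl G l]) ([l] @ [] @ [invl G l])"
    by (rule fp_eq_ctx) (use Cons in auto)
  then show ?case using cancel_pair_r[of l] Cons.prems by (auto intro: fp_eq_trans)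
qed

lemma cancel_l: "VW G w \<Longrightarrow> fp_eq G (invw G w @ w) []"
proof (induction w rule: rev_induct)
  case Nil then show ?case by simp
next
  case (snoc l w)
  have "fp_eq G ([invl G l] @ (invw G w @ w) @ [l]) ([invl G l] @ [] @ [l])"
    by (rule fp_eq_ctx) (use snoc in auto)
  then show ?case using cancel_pair_l[of l] snoc.prems by (auto intro: fp_eq_trans)
qed

lemma cancel_mid: "VW G u \<Longrightarrow> fp_eq G (a @ u @ invw G u @ b) (a @ b)"
  using fp_eq_ctx[OF cancel_r[of u], of a b] by simp

lemma cancel_mid': "VW G u \<Longrightarrow> fp_eq G (a @ invw G u @ u @ b) (a @ b)"
  using fp_eq_ctx[OF cancel_l[of u], of a b] by simp

lemma invw_fp_eq:
  assumes "VW G p" "VW G q" "fp_eq G p q"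
  shows "fp_eq G (invw G p) (invw G q)"
proof -
  have "fp_eq G (invw G p) (invw G p @ q @ invw G q)"
    using cancel_mid[OF assms(2), of "invw G p" "[]"] by (simp add: fp_eq_sym)
  also have "fp_eq G (invw G p @ q @ invw G q) (invw G p @ p @ invw G q)"
    using fp_eq_ctx[OF fp_eq_sym[OF assms(3)], of "invw G p" "invw G q"] by simp
  also have "fp_eq G (invw G p @ p @ invw G q) (invw G q)"
    using cancel_mid'[OF assms(1), of "[]" "invw G q"] by simp
  finally show ?thesis .
qed

lemma pow_conj:
  assumes "fp_eq G (v @ u) []" "k > 0"
  shows "fp_eq G (wpow k (u @ x @ v)) (u @ wpow k x @ v)"
  using assms(2)
proof (induction k)
  case 0 then show ?case by simp
next
  case (Suc k)
  show ?case
  proof (cases "k = 0")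
    case True then show ?thesis by (simp add: wpow_def)
  next
    case False
    then have IH: "fp_eq G (wpow k (u @ x @ v)) (u @ wpow k x @ v)" using Suc by simp
    have "fp_eq G (wpow (Suc k) (u @ x @ v)) ((u @ x) @ (v @ u) @ (wpow k x @ v))"
      using fp_eq_app_left[OF IH, of "u @ x @ v"] by (simp add: wpow_Suc)
    also have "fp_eq G ((u @ x) @ (v @ u) @ (wpow k x @ v)) ((u @ x) @ [] @ (wpow k x @ v))"
      by (rule fp_eq_ctx[OF assms(1)])
    finally show ?thesis by (simp add: wpow_Suc)
  qed
qed

lemma single_index:
  assumes "VW G xs" "\<forall>l\<in>set xs. fst l = i"
  shows "fp_eq G xs [] \<or> (\<exists>a\<in>carrier (G i). a \<noteq> \<one>\<^bsub>G i\<^esub> \<and> fp_eq G xs [(i,a)])"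
  using assms
proof (induction xs rule: rev_induct)
  case Nil then show ?case by simp
next
  case (snoc l xs)
  obtain y where l: "l = (i,y)" and y: "y \<in> carrier (G i)" "y \<noteq> \<one>\<^bsub>G i\<^esub>"
    using snoc.prems by (cases l) (auto simp: is_letter_def)
  from snoc have "fp_eq G xs [] \<or> (\<exists>a\<in>carrier (G i). a \<noteq> \<one>\<^bsub>G i\<^esub> \<and> fp_eq G xs [(i,a)])" by auto
  then show ?case
  proof
    assume "fp_eq G xs []"
    then have "fp_eq G (xs @ [l]) [l]" using fp_eq_app_right by fastforce
    then show ?thesis using l y by auto
  next
    assume "\<exists>a\<in>carrier (G i). a \<noteq> \<one>\<^bsub>G i\<^esub> \<and> fp_eq G xs [(i,a)]"
    then obtain a where a: "a \<in> carrier (G i)" "fp_eq G xs [(i,a)]" by auto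
    have xa: "fp_eq G (xs @ [l]) [(i,a),(i,y)]" using fp_eq_app_right[OF a(2), of "[l]"] l by simp
    show ?thesis
    proof (cases "a \<otimes>\<^bsub>G i\<^esub> y = \<one>\<^bsub>G i\<^esub>")
      case True
      then show ?thesis using xa e1[of G i a y] by (auto intro: fp_eq_trans)
    next
      case False
      then show ?thesis using xa e2[of G i a y] a y group.subgroupE(4)[OF grp]
        by (meson fp_eq_trans group.is_monoid grp monoid.m_closed)
    qed
  qed
qed

end



definition pal :: "(nat \<Rightarrow> 'a monoid) \<Rightarrow> 'a state \<Rightarrow> bool" where
  "pal G T \<longleftrightarrow> T = [] \<or> (\<exists>Tt i c0 B. T = Tt @ [(i,c0)] @ B \<and> fp_eq G (rep Tt) (invw G (rep B)))"

context
  fixes G :: "nat \<Rightarrow> 'a monoid"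
  assumes grp: "\<And>n. group (G n)"
begin

lemma pal_lemma:
  assumes "VS G T" "CV G T" "k > 0" "fp_eq G (wpow k (rep T)) []"
  shows "pal G T"
  using assms
proof (induction "length T" arbitrary: T rule: less_induct)
  case less
  show ?case
  proof (cases T)
    case Nil then show ?thesis by (simp add: pal_def)
  next
    case (Cons a T1)
    show ?thesis
    proof (cases "T1 = []")
      case True
      then show ?thesis using Cons unfolding pal_def
        by (cases a) (rule disjI2, rule exI[of _ "[]"], auto)
    next
      case False
      then obtain M c where T1: "T1 = M @ [c]" by (cases T1 rule: rev_exhaust) auto
      obtain n br where a: "a = (n,br)" by (cases a)
      obtain n' b1 where c: "c = (n',b1)" by (cases c)
      have T: "T = (n,br) # M @ [(n',b1)]" using Cons T1 a c by simp
      show ?thesis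
      proof (cases "n = n'")
        case False
        then show ?thesis using no_finite_order[OF less.prems(1), of k] less.prems T by simp
      next
        case True
        note nn = True
        have vT: "VS G ((n,br) # M @ [(n,b1)])" using less.prems T True by simp
        have cT: "CV G ((n,br) # M @ [(n,b1)])" using less.prems T True by simp
        have Mne: "M \<noteq> []" using vT by (auto simp: VS_Cons)
        have vM: "VS G M" using vT by (simp add: VS_Cons VS_append)
        have cM: "CV G M" and vbr: "VW G br" and vb1: "VW G b1" using cT by auto
        have repT: "rep T = b1 @ rep M @ br" using T True by simp
        show ?thesis
        proof (cases "fp_eq G (br @ b1) []")
          case True
          have "fp_eq G br (br @ b1 @ invw G b1)"
            using cancel_mid[OF grp vb1, of br "[]"] by (simp add: fp_eq_sym)
          also have "fp_eq G (br @ b1 @ invw G b1) ([] @ invw G b1)"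
            using fp_eq_app_right[OF True, of "invw G b1"] by simp
          finally have brinv: "fp_eq G br (invw G b1)" by simp
          have "fp_eq G (rep T) (b1 @ rep M @ invw G b1)"
            unfolding repT by (rule fp_eq_app_left, rule fp_eq_app_left, rule brinv)
          then have "fp_eq G (wpow k (rep T)) (wpow k (b1 @ rep M @ invw G b1))"
            by (rule wpow_fp_eq)
          also have "fp_eq G (wpow k (b1 @ rep M @ invw G b1)) (b1 @ wpow k (rep M) @ invw G b1)"
            by (rule pow_conj[OF grp cancel_l[OF grp vb1] less.prems(3)])
          finally have e: "fp_eq G (b1 @ wpow k (rep M) @ invw G b1) []"
            using less.prems(4) by (meson fp_eq_iff_trans)
          have "fp_eq G (wpow k (rep M)) (invw G b1 @ (b1 @ wpow k (rep M) @ invw G b1) @ b1)"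
            using cancel_mid'[OF grp vb1, of "[]" "wpow k (rep M) @ invw G b1 @ b1"]
              cancel_mid'[OF grp vb1, of "wpow k (rep M)" "[]"]
            by (simp add: fp_eq_sym) (meson fp_eq_iff_trans fp_eq_sym)
          also have "fp_eq G (invw G b1 @ (b1 @ wpow k (rep M) @ invw G b1) @ b1) (invw G b1 @ [] @ b1)"
            by (rule fp_eq_ctx[OF e])
          also have "fp_eq G (invw G b1 @ [] @ b1) []" using cancel_l[OF grp vb1] by simp
          finally have eM: "fp_eq G (wpow k (rep M)) []" by simp
          have "length M < length T" using T by simp
          then have "pal G M" using less.hyps vM cM less.prems(3) eM by blast
          then obtain Mt i c0 Mb where M: "M = Mt @ [(i,c0)] @ Mb" and
            eMt: "fp_eq G (rep Mt) (invw G (rep Mb))"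
            using Mne by (auto simp: pal_def)
          have "fp_eq G (rep ((n,br) # Mt)) (invw G (rep (Mb @ [(n,b1)])))"
            using fp_eq_app[OF eMt brinv] by simp
          moreover have "T = ((n,br) # Mt) @ [(i,c0)] @ (Mb @ [(n,b1)])" using T M nn by simp
          ultimately show ?thesis unfolding pal_def by blast
        next
          case False
          let ?T2 = "(n, br @ b1) # M"
          have idx: "\<forall>l\<in>set (br @ b1). fst l = n" using vT by (auto simp: VS_Cons VS_append)
          have hdM: "fst (hd M) \<noteq> n" using vT Mne by (auto simp: VS_Cons)
          have lastM: "fst (last M) \<noteq> n" using vT Mne by (auto simp: VS_Cons VS_append)
          have v2: "VS G ?T2" using vM idx False hdM by (simp add: VS_Cons)
          have d2: "fst (hd ?T2) \<noteq> fst (last ?T2)" using lastM Mne by simp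
          have nf: "\<not> fp_eq G (wpow k (rep ?T2)) []"
            by (rule no_finite_order[OF v2 _ d2 less.prems(3)]) simp
          have r2: "rep ?T2 = rep M @ br @ b1" by simp
          have "fp_eq G (rep ?T2) (invw G b1 @ rep T @ b1)"
            using cancel_mid'[OF grp vb1, of "[]" "rep M @ br @ b1"] unfolding r2 repT
            by (simp add: fp_eq_sym)
          then have "fp_eq G (wpow k (rep ?T2)) (wpow k (invw G b1 @ rep T @ b1))"
            by (rule wpow_fp_eq)
          also have "fp_eq G (wpow k (invw G b1 @ rep T @ b1)) (invw G b1 @ wpow k (rep T) @ b1)"
            by (rule pow_conj[OF grp cancel_r[OF grp vb1] less.prems(3)])
          also have "fp_eq G (invw G b1 @ wpow k (rep T) @ b1) (invw G b1 @ [] @ b1)"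
            by (rule fp_eq_ctx[OF less.prems(4)])
          also have "fp_eq G (invw G b1 @ [] @ b1) []" using cancel_l[OF grp vb1] by simp
          finally show ?thesis using nf by simp
        qed
      qed
    qed
  qed
qed

end



lemma act_Q:
  assumes "act G l t = pre @ (i,c) # B"
    and "\<not> (\<exists>pre' c'. t = pre' @ (i,c') # B)"
  shows "\<exists>c'. act G l t = (i,c') # B"
proof (cases t)
  case Nil
  then show ?thesis using assms by (auto simp: act_def Cons_eq_append_conv split: if_splits)
next
  case (Cons a s')
  obtain k b where a: "a = (k,b)" by (cases a)
  have h1: False if "s' = pre @ (i,c) # B"
    using assms(2) that Cons a by (metis append_Cons)
  show ?thesis
    using assms Cons a h1
    by (auto simp: act_def Cons_eq_append_conv split: if_splits)
qed

context
  fixes G :: "nat \<Rightarrow> 'a monoid"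
  assumes grp: "\<And>n. group (G n)"
begin

lemma level_lemma:
  assumes vw: "VW G w" and k: "k > 0" and e: "fp_eq G (wpow k w) []"
  shows "\<exists>j \<le> length w. fp_eq G (invw G (take j w) @ w @ take j w) [] \<or>
     (\<exists>i. \<exists>a\<in>carrier (G i). a \<noteq> \<one>\<^bsub>G i\<^esub> \<and> fp_eq G (invw G (take j w) @ w @ take j w) [(i,a)])"
proof -
  define T where "T = fold (act G) w []"
  have vT: "VS G T" unfolding T_def by (rule VS_fold) simp
  have cT: "CV G T" unfolding T_def by (rule CV_fold) (use vw in auto)
  have wT: "fp_eq G w (rep T)" using fold_rep[of G "[]" w] unfolding T_def by simp
  have "fp_eq G (wpow k (rep T)) []"
    using wpow_fp_eq[OF wT, of k] e by (meson fp_eq_iff_trans)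
  then have "pal G T" by (rule pal_lemma[OF grp vT cT k])
  then show ?thesis
  proof (unfold pal_def, elim disjE exE conjE)
    assume "T = []"
    then show ?thesis using wT by (intro exI[of _ 0]) auto
  next
    fix Tt i c0 B
    assume T: "T = Tt @ [(i,c0)] @ B" and eTt: "fp_eq G (rep Tt) (invw G (rep B))"
    define P where "P j \<longleftrightarrow> j \<le> length w \<and> (\<exists>pre c. fold (act G) (take j w) [] = pre @ (i,c) # B)" for j
    have Pl: "P (length w)" unfolding P_def using T T_def by auto
    define j0 where "j0 = (LEAST j. P j)"
    have Pj0: "P j0" unfolding j0_def by (rule LeastI[of P, OF Pl])
    have "j0 \<noteq> 0"
    proof
      assume "j0 = 0" with Pj0 show False by (auto simp: P_def)
    qed
    then obtain j1 where j0: "j0 = Suc j1" by (cases j0) auto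
    have nP: "\<not> P j1" using j0 not_less_Least[of j1 P] unfolding j0_def[symmetric] by auto
    have j1l: "j1 < length w" using Pj0 j0 by (auto simp: P_def)
    then have nQ: "\<not> (\<exists>pre c. fold (act G) (take j1 w) [] = pre @ (i,c) # B)" using nP by (auto simp: P_def)
    have st: "fold (act G) (take j0 w) [] = act G (w ! j1) (fold (act G) (take j1 w) [])"
      using j0 j1l by (simp add: take_Suc_conv_app_nth)
    obtain c where S: "fold (act G) (take j0 w) [] = (i,c) # B"
      using act_Q[of G "w ! j1" _ _ i _ B] Pj0 nQ st unfolding P_def by metis
    let ?p = "take j0 w"
    have vp: "VW G ?p" using vw by (auto simp: VW_def dest: in_set_takeD)
    have vS: "VS G ((i,c) # B)" using S[symmetric] by (auto intro: VS_fold)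
    have cS: "CV G ((i,c) # B)" using S[symmetric] CV_fold[OF CV_simps(1) vp] by simp
    have pS: "fp_eq G ?p (rep B @ c)" using fold_rep[of G "[]" ?p] S by simp
    have vrB: "VW G (rep B)" and vc: "VW G c" using cS VW_rep by auto
    have vc0: "VW G c0" and vTt: "VW G (rep Tt)" using cT T VW_rep by auto
    have ip: "fp_eq G (invw G ?p) (invw G c @ invw G (rep B))"
      using invw_fp_eq[OF grp vp _ pS] vrB vc by simp
    have wB: "fp_eq G w (rep B @ c0 @ invw G (rep B))"
      using wT T fp_eq_app_left[OF eTt, of "rep B @ c0"] by simp (meson fp_eq_trans)
    have "fp_eq G (invw G ?p @ w @ ?p) ((invw G c @ invw G (rep B)) @ (rep B @ c0 @ invw G (rep B)) @ (rep B @ c))"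
      using fp_eq_app[OF ip fp_eq_app[OF wB pS]] by simp
    also have "fp_eq G ((invw G c @ invw G (rep B)) @ (rep B @ c0 @ invw G (rep B)) @ (rep B @ c)) (invw G c @ c0 @ c)"
      using cancel_mid'[OF grp vrB, of "invw G c" "c0 @ invw G (rep B) @ rep B @ c"]
        cancel_mid'[OF grp vrB, of "invw G c @ c0" "c"]
      by simp (meson fp_eq_trans)
    finally have conj: "fp_eq G (invw G ?p @ w @ ?p) (invw G c @ c0 @ c)" .
    have idxc: "\<forall>l\<in>set c. fst l = i" using vS by (simp add: VS_Cons)
    have idxc0: "\<forall>l\<in>set c0. fst l = i" using vT T by (simp add: VS_append VS_Cons)
    have "VW G (invw G c @ c0 @ c)" using VW_invw[OF grp vc] vc0 vc by simp
    moreover have "\<forall>l\<in>set (invw G c @ c0 @ c). fst l = i"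
      using idxc idxc0 by (auto simp: invw_def invl_def)
    ultimately have "fp_eq G (invw G c @ c0 @ c) [] \<or> (\<exists>a\<in>carrier (G i). a \<noteq> \<one>\<^bsub>G i\<^esub> \<and> fp_eq G (invw G c @ c0 @ c) [(i,a)])"
      by (rule single_index[OF grp])
    then show ?thesis using conj Pj0 unfolding P_def
      by (intro exI[of _ j0]) (meson fp_eq_trans)
  qed
qed

end



lemma sl_set: "sorted_wrt (<) l \<Longrightarrow> sorted_list_of_set (set l) = l"
  by (simp add: sorted_list_of_set.idem_if_sorted_distinct strict_sorted_iff)

lemma sl_sorted: "sorted_wrt (<) (sorted_list_of_set A)"
  by (simp add: strict_sorted_iff)

lemma sl_image:
  assumes "finite A" "strict_mono (f :: 'b::linorder \<Rightarrow> 'c::linorder)"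
  shows "sorted_list_of_set (f ` A) = map f (sorted_list_of_set A)"
proof -
  have "sorted_wrt (<) (map f (sorted_list_of_set A))"
    unfolding sorted_wrt_map
    by (rule sorted_wrt_mono_rel[OF _ sl_sorted[of A]]) (use assms(2) in \<open>auto simp: strict_mono_def\<close>)
  moreover have "set (map f (sorted_list_of_set A)) = f ` A" using assms by simp
  ultimately show ?thesis using sl_set by metis
qed

lemma sl_union:
  assumes "finite A" "finite B" "\<forall>a\<in>A. \<forall>b\<in>B. a < b"
  shows "sorted_list_of_set (A \<union> B) = sorted_list_of_set A @ sorted_list_of_set (B :: 'b::linorder set)"
proof -
  have "sorted_wrt (<) (sorted_list_of_set A @ sorted_list_of_set B)"
    using assms sl_sorted[of A] sl_sorted[of B] by (auto simp: sorted_wrt_append)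
  moreover have "set (sorted_list_of_set A @ sorted_list_of_set B) = A \<union> B" using assms by simp
  ultimately show ?thesis using sl_set by metis
qed

lemma sl_filter:
  assumes "finite A"
  shows "sorted_list_of_set {x \<in> A. P x} = filter P (sorted_list_of_set (A :: 'b::linorder set))"
proof -
  have "sorted_wrt (<) (filter P (sorted_list_of_set A))"
    using sl_sorted[of A] by (simp add: sorted_wrt_filter)
  moreover have "set (filter P (sorted_list_of_set A)) = {x \<in> A. P x}" using assms by auto
  ultimately show ?thesis using sl_set by metis
qed

lemma sl_uminus:
  assumes "finite A"
  shows "sorted_list_of_set (uminus ` A) = rev (map uminus (sorted_list_of_set (A :: rat set)))"
proof -
  have "sorted_wrt (<) (rev (map uminus (sorted_list_of_set A)))"
    unfolding sorted_wrt_rev sorted_wrt_map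
    by (rule sorted_wrt_mono_rel[OF _ sl_sorted[of A]]) auto
  moreover have "set (rev (map uminus (sorted_list_of_set A))) = uminus ` A" using assms by simp
  ultimately show ?thesis using sl_set by metis
qed

lemma squash_mono: "strict_mono squash"
proof (rule strict_monoI)
  fix a b :: rat assume ab: "a < b"
  have pa: "1 + \<bar>a\<bar> > 0" and pb: "1 + \<bar>b\<bar> > 0" by auto
  have "a * (1 + \<bar>b\<bar>) < b * (1 + \<bar>a\<bar>)"
  proof (cases "a \<ge> 0")
    case True
    then have "b \<ge> 0" using ab by simp
    then show ?thesis using True ab by (simp add: algebra_simps)
  next
    case False
    show ?thesis
    proof (cases "b \<ge> 0")
      case True
      have "a * (1 + \<bar>b\<bar>) < 0" using False by (simp add: mult_neg_pos add_pos_nonneg)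
      moreover have "b * (1 + \<bar>a\<bar>) \<ge> 0" using True by simp
      ultimately show ?thesis by linarith
    next
      case False2: False
      then show ?thesis using False ab by (simp add: algebra_simps)
    qed
  qed
  then show "squash a < squash b" unfolding squash_def using pa pb by (simp add: field_simps)
qed

lemma squash_bound: "\<bar>squash q\<bar> < 1"
proof -
  have "\<bar>q\<bar> < 1 + \<bar>q\<bar>" by simp
  then show ?thesis unfolding squash_def by (simp add: field_simps)
qed

lemma squash_inj: "inj squash" using squash_mono strict_mono_imp_inj_on by blast



lemma iword_fin_le: "is_iword G W \<Longrightarrow> finite {q \<in> fst W. fst (snd W q) \<le> m}"
proof -
  assume w: "is_iword G W"
  have "{q \<in> fst W. fst (snd W q) \<le> m} = (\<Union>n\<in>{..m}. {q \<in> fst W. fst (snd W q) = n})" by auto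
  then show ?thesis using w by (simp add: is_iword_def)
qed

lemma proj_VW: "is_iword G W \<Longrightarrow> VW G (proj m W)"
  by (auto simp: VW_def proj_def is_iword_def iword_fin_le)

lemma proj_filter:
  assumes w: "is_iword G W" and mn: "m \<le> n"
  shows "proj m W = filter (\<lambda>l. fst l \<le> m) (proj n W)"
proof -
  have eq: "{q \<in> fst W. fst (snd W q) \<le> m} = {q \<in> {q \<in> fst W. fst (snd W q) \<le> n}. fst (snd W q) \<le> m}"
    using mn by auto
  have "sorted_list_of_set {q \<in> fst W. fst (snd W q) \<le> m} = filter (\<lambda>q. fst (snd W q) \<le> m) (sorted_list_of_set {q \<in> fst W. fst (snd W q) \<le> n})"
    unfolding eq by (rule sl_filter[OF iword_fin_le[OF w]])
  then show ?thesis unfolding proj_def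
    by (simp add: filter_map comp_def)
qed

definition f1 :: "rat \<Rightarrow> rat" where "f1 q = squash q - 1"
definition f2 :: "rat \<Rightarrow> rat" where "f2 q = squash q + 1"

lemma f1_mono: "strict_mono f1" using squash_mono by (auto simp: strict_mono_def f1_def)
lemma f2_mono: "strict_mono f2" using squash_mono by (auto simp: strict_mono_def f2_def)
lemma f1_neg: "f1 q < 0" using squash_bound[of q] by (auto simp: f1_def)
lemma f2_pos: "f2 q > 0" using squash_bound[of q] by (auto simp: f2_def)

lemma concat_fst: "fst (concat_word W V) = f1 ` fst W \<union> f2 ` fst V"
  by (simp add: concat_word_def f1_def f2_def)

lemma concat_snd1: "snd (concat_word W V) (f1 q) = snd W q"
  using f1_neg[of q] by (simp add: concat_word_def f1_def the_inv_f_f[OF squash_inj])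

lemma concat_snd2: "snd (concat_word W V) (f2 q) = snd V q"
  using f2_pos[of q] by (simp add: concat_word_def f2_def the_inv_f_f[OF squash_inj])

lemma concat_set: "{r \<in> fst (concat_word W V). P (snd (concat_word W V) r)} =
   f1 ` {q \<in> fst W. P (snd W q)} \<union> f2 ` {q \<in> fst V. P (snd V q)}"
  by (auto simp: concat_fst concat_snd1 concat_snd2)

lemma is_iword_concat:
  assumes "is_iword G W" "is_iword G V"
  shows "is_iword G (concat_word W V)"
proof -
  have "finite {r \<in> fst (concat_word W V). fst (snd (concat_word W V) r) = n}" for n
    using concat_set[of W V "\<lambda>l. fst l = n"] assms by (simp add: is_iword_def)
  moreover have "\<forall>q\<in>fst (concat_word W V). is_letter G (snd (concat_word W V) q)"
    using assms by (auto simp: concat_fst concat_snd1 concat_snd2 is_iword_def)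
  ultimately show ?thesis by (simp add: is_iword_def)
qed

lemma proj_concat:
  assumes w: "is_iword G W" and v: "is_iword G V"
  shows "proj m (concat_word W V) = proj m W @ proj m V"
proof -
  let ?A = "{q \<in> fst W. fst (snd W q) \<le> m}" and ?B = "{q \<in> fst V. fst (snd V q) \<le> m}"
  have fa: "finite ?A" "finite ?B" using iword_fin_le[OF w] iword_fin_le[OF v] by auto
  have "sorted_list_of_set (f1 ` ?A \<union> f2 ` ?B) = sorted_list_of_set (f1 ` ?A) @ sorted_list_of_set (f2 ` ?B)"
    apply (rule sl_union) using fa f1_neg f2_pos by (auto intro: less_trans)
  also have "\<dots> = map f1 (sorted_list_of_set ?A) @ map f2 (sorted_list_of_set ?B)"
    using sl_image[OF fa(1) f1_mono] sl_image[OF fa(2) f2_mono] by simp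
  finally show ?thesis unfolding proj_def
    using concat_set[of W V "\<lambda>l. fst l \<le> m"] by (simp add: comp_def concat_snd1 concat_snd2)
qed

lemma um: "(x::rat) \<in> uminus ` A \<longleftrightarrow> - x \<in> A"
  by (metis image_eqI minus_minus imageE)

definition invword :: "(nat \<Rightarrow> 'a monoid) \<Rightarrow> 'a iword \<Rightarrow> 'a iword" where
  "invword G W = (uminus ` fst W, \<lambda>q. invl G (snd W (- q)))"

lemma proj_invword:
  assumes w: "is_iword G W"
  shows "proj m (invword G W) = invw G (proj m W)"
proof -
  let ?A = "{q \<in> fst W. fst (snd W q) \<le> m}"
  have "{q \<in> fst (invword G W). fst (snd (invword G W) q) \<le> m} = uminus ` ?A"
    by (simp add: set_eq_iff um invword_def invl_def)
  then show ?thesis unfolding proj_def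
    by (simp add: sl_uminus[OF iword_fin_le[OF w]] invw_def rev_map comp_def invword_def)
qed

lemma is_iword_invword:
  assumes grp: "\<And>n. group (G n)" and w: "is_iword G W"
  shows "is_iword G (invword G W)"
proof -
  have "{q \<in> fst (invword G W). fst (snd (invword G W) q) = n} = uminus ` {q \<in> fst W. fst (snd W q) = n}" for n
    by (simp add: set_eq_iff um invword_def invl_def)
  then show ?thesis using w is_letter_invl[OF grp]
    by (auto simp: is_iword_def invword_def)
qed

lemma proj_empty[simp]: "proj m empty_word = []"
  by (simp add: proj_def empty_word_def)

lemma is_iword_empty: "is_iword G empty_word"
  by (simp add: is_iword_def empty_word_def)

definition lword :: "nat \<Rightarrow> 'a \<Rightarrow> 'a iword" where
  "lword i a = ({0}, \<lambda>_. (i, a))"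

lemma proj_lword: "proj m (lword i a) = (if i \<le> m then [(i,a)] else [])"
proof -
  have "{q \<in> {0::rat}. i \<le> m} = (if i \<le> m then {0} else {})" by auto
  then show ?thesis by (simp add: proj_def lword_def)
qed

lemma is_iword_lword: "is_letter G (i,a) \<Longrightarrow> is_iword G (lword i a)"
  by (auto simp: is_iword_def lword_def)

lemma is_iword_restr:
  assumes w: "is_iword G W" and I: "I \<subseteq> fst W"
  shows "is_iword G (I, snd W)"
proof -
  have s: "{q \<in> I. fst (snd W q) = n} \<subseteq> {q \<in> fst W. fst (snd W q) = n}" for n using I by auto
  have "finite {q \<in> I. fst (snd W q) = n}" for n
    using finite_subset[OF s] w unfolding is_iword_def by blast
  then show ?thesis using w I unfolding is_iword_def by auto
qed

section \<open>The equivalence\<close>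

lemma word_equiv_equiv: "equiv {W. is_iword G W} (word_equiv G)"
proof (rule equivI)
  show "refl_on {W. is_iword G W} (word_equiv G)"
    by (auto simp: refl_on_def word_equiv_def)
  show "word_equiv G \<subseteq> {W. is_iword G W} \<times> {W. is_iword G W}"
    by (auto simp: word_equiv_def)
  show "sym (word_equiv G)"
  proof (rule symI)
    fix a b assume "(a, b) \<in> word_equiv G"
    then show "(b, a) \<in> word_equiv G" unfolding word_equiv_def using fp_eq_sym by fastforce
  qed
  show "trans (word_equiv G)"
  proof (rule transI)
    fix a b c assume "(a, b) \<in> word_equiv G" "(b, c) \<in> word_equiv G"
    then show "(a, c) \<in> word_equiv G" unfolding word_equiv_def
      by simp (meson fp_eq_trans)
  qed
qed

abbreviation cls :: "(nat \<Rightarrow> 'a monoid) \<Rightarrow> 'a iword \<Rightarrow> 'a iword set" where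
  "cls G W \<equiv> word_equiv G `` {W}"

lemma cls_eq:
  assumes "is_iword G W" "is_iword G V"
  shows "cls G W = cls G V \<longleftrightarrow> (\<forall>m. fp_eq G (proj m W) (proj m V))"
  using equiv_class_eq_iff[OF word_equiv_equiv, of W V G] assms
  by (auto simp: word_equiv_def)

lemma carrier_topprod: "carrier (topprod G) = {cls G W | W. is_iword G W}"
  by (simp add: topprod_def)

lemma one_topprod: "\<one>\<^bsub>topprod G\<^esub> = cls G empty_word"
  by (simp add: topprod_def)

lemma mult_cls:
  assumes w: "is_iword G W" and v: "is_iword G V"
  shows "cls G W \<otimes>\<^bsub>topprod G\<^esub> cls G V = cls G (concat_word W V)"
proof -
  define W' where "W' = (SOME W'. W' \<in> cls G W)"
  define V' where "V' = (SOME V'. V' \<in> cls G V)"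
  have "W \<in> cls G W" "V \<in> cls G V" using w v by (auto simp: word_equiv_def)
  then have W': "W' \<in> cls G W" and V': "V' \<in> cls G V" unfolding W'_def V'_def by (auto intro: someI)
  then have ww: "is_iword G W'" "\<forall>m. fp_eq G (proj m W) (proj m W')"
    and vv: "is_iword G V'" "\<forall>m. fp_eq G (proj m V) (proj m V')"
    by (auto simp: word_equiv_def)
  have "fp_eq G (proj m (concat_word W' V')) (proj m (concat_word W V))" for m
    using fp_eq_app[OF fp_eq_sym[OF spec[OF ww(2), of m]] fp_eq_sym[OF spec[OF vv(2), of m]]]
    by (simp only: proj_concat[OF ww(1) vv(1)] proj_concat[OF w v])
  then have "cls G (concat_word W' V') = cls G (concat_word W V)"
    using cls_eq[OF is_iword_concat[OF ww(1) vv(1)] is_iword_concat[OF w v]] by simp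
  then show ?thesis unfolding topprod_def W'_def V'_def by simp
qed



context
  fixes G :: "nat \<Rightarrow> 'a monoid"
  assumes grp: "\<And>n. group (G n)"
begin

lemma topprod_group: "group (topprod G)"
proof (rule groupI)
  fix x y assume "x \<in> carrier (topprod G)" "y \<in> carrier (topprod G)"
  then obtain W V where wv: "is_iword G W" "x = cls G W" "is_iword G V" "y = cls G V"
    by (auto simp: carrier_topprod)
  then have "x \<otimes>\<^bsub>topprod G\<^esub> y = cls G (concat_word W V)" "is_iword G (concat_word W V)"
    using mult_cls[OF wv(1,3)] is_iword_concat[OF wv(1,3)] by auto
  then show "x \<otimes>\<^bsub>topprod G\<^esub> y \<in> carrier (topprod G)"
    unfolding carrier_topprod by blast
next
  show "\<one>\<^bsub>topprod G\<^esub> \<in> carrier (topprod G)"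
    using is_iword_empty unfolding carrier_topprod one_topprod by blast
next
  fix x y z assume "x \<in> carrier (topprod G)" "y \<in> carrier (topprod G)" "z \<in> carrier (topprod G)"
  then obtain W V U where w: "is_iword G W" "x = cls G W" and v: "is_iword G V" "y = cls G V"
    and u: "is_iword G U" "z = cls G U"
    by (auto simp: carrier_topprod)
  have wv: "is_iword G (concat_word W V)" and vu: "is_iword G (concat_word V U)"
    using is_iword_concat[OF w(1) v(1)] is_iword_concat[OF v(1) u(1)] .
  have a1: "is_iword G (concat_word (concat_word W V) U)" and a2: "is_iword G (concat_word W (concat_word V U))"
    using is_iword_concat[OF wv u(1)] is_iword_concat[OF w(1) vu] .
  have "cls G (concat_word (concat_word W V) U) = cls G (concat_word W (concat_word V U))"
    unfolding cls_eq[OF a1 a2] proj_concat[OF wv u(1)] proj_concat[OF w(1) vu] proj_concat[OF w(1) v(1)]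
      proj_concat[OF v(1) u(1)] by simp
  then show "x \<otimes>\<^bsub>topprod G\<^esub> y \<otimes>\<^bsub>topprod G\<^esub> z = x \<otimes>\<^bsub>topprod G\<^esub> (y \<otimes>\<^bsub>topprod G\<^esub> z)"
    using w v u by (simp add: mult_cls[OF w(1) v(1)] mult_cls[OF wv u(1)] mult_cls[OF v(1) u(1)] mult_cls[OF w(1) vu])
next
  fix x assume "x \<in> carrier (topprod G)"
  then obtain W where w: "is_iword G W" "x = cls G W" by (auto simp: carrier_topprod)
  have e: "is_iword G (concat_word empty_word W)" using is_iword_concat[OF is_iword_empty w(1)] .
  have "cls G (concat_word empty_word W) = cls G W"
    unfolding cls_eq[OF e w(1)] proj_concat[OF is_iword_empty w(1)] by simp
  then show "\<one>\<^bsub>topprod G\<^esub> \<otimes>\<^bsub>topprod G\<^esub> x = x"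
    using w by (simp add: one_topprod mult_cls[OF is_iword_empty w(1)])
next
  fix x assume "x \<in> carrier (topprod G)"
  then obtain W where w: "is_iword G W" "x = cls G W" by (auto simp: carrier_topprod)
  have iw: "is_iword G (invword G W)" by (rule is_iword_invword[OF grp w(1)])
  have e: "is_iword G (concat_word (invword G W) W)" using is_iword_concat[OF iw w(1)] .
  have "cls G (concat_word (invword G W) W) = cls G empty_word"
    unfolding cls_eq[OF e is_iword_empty] proj_concat[OF iw w(1)] proj_invword[OF w(1)]
    using cancel_l[OF grp proj_VW[OF w(1)]] by simp
  show "\<exists>y\<in>carrier (topprod G). y \<otimes>\<^bsub>topprod G\<^esub> x = \<one>\<^bsub>topprod G\<^esub>"
  proof (rule bexI[of _ "cls G (invword G W)"])
    show "cls G (invword G W) \<otimes>\<^bsub>topprod G\<^esub> x = \<one>\<^bsub>topprod G\<^esub>"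
      using w mult_cls[OF iw w(1)] \<open>cls G (concat_word (invword G W) W) = cls G empty_word\<close>
      unfolding one_topprod by simp
    show "cls G (invword G W) \<in> carrier (topprod G)" using iw unfolding carrier_topprod by blast
  qed
qed

lemma pow_word:
  assumes w: "is_iword G W"
  shows "\<exists>Wk. is_iword G Wk \<and> cls G W [^]\<^bsub>topprod G\<^esub> k = cls G Wk \<and> (\<forall>m. fp_eq G (proj m Wk) (wpow k (proj m W)))"
proof (induction k)
  case 0
  show ?case using is_iword_empty by (intro exI[of _ empty_word]) (simp add: one_topprod)
next
  case (Suc k)
  then obtain Wk where wk: "is_iword G Wk" "cls G W [^]\<^bsub>topprod G\<^esub> k = cls G Wk"
    "\<forall>m. fp_eq G (proj m Wk) (wpow k (proj m W))" by blast
  have "fp_eq G (proj m (concat_word Wk W)) (wpow (Suc k) (proj m W))" for m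
    using fp_eq_app_right[OF spec[OF wk(3), of m], of "proj m W"]
    by (simp add: proj_concat[OF wk(1) w] wpow_Suc')
  then show ?case using wk w is_iword_concat[OF wk(1) w] mult_cls[OF wk(1) w]
    by (intro exI[of _ "concat_word Wk W"]) simp
qed

end



locale kset =
  fixes D :: "nat \<Rightarrow> 'b set" and good :: "nat \<Rightarrow> 'b set \<Rightarrow> bool"
  assumes fin: "\<And>m. finite (D m)"
    and mono: "\<And>m. D m \<subseteq> D (Suc m)"
    and sub: "\<And>m X. good m X \<Longrightarrow> X \<subseteq> D m"
    and ne: "\<And>m. \<exists>X. good m X"
    and comp: "\<And>m X. good (Suc m) X \<Longrightarrow> good m (X \<inter> D m)"
begin

lemma monoD: "m \<le> n \<Longrightarrow> D m \<subseteq> D n"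
  using mono by (rule lift_Suc_mono_le)

lemma compD: "m \<le> n \<Longrightarrow> good n X \<Longrightarrow> good m (X \<inter> D m)"
proof (induction n arbitrary: X rule: dec_induct)
  case base
  then show ?case using sub[of m X] by (simp add: Int_absorb2)
next
  case (step n)
  have "good n (X \<inter> D n)" using comp step.prems by blast
  then have "good m (X \<inter> D n \<inter> D m)" using step.IH by blast
  moreover have "X \<inter> D n \<inter> D m = X \<inter> D m" using monoD[OF step.hyps(1)] by blast
  ultimately show ?case by simp
qed

definition ext :: "nat \<Rightarrow> 'b set \<Rightarrow> bool" where
  "ext m Y \<longleftrightarrow> Y \<subseteq> D m \<and> (\<forall>n\<ge>m. \<exists>Z. good n Z \<and> Z \<inter> D m = Y)"

lemma choose:
  assumes C: "finite C" and h: "\<forall>n\<ge>m. \<exists>Z. good n Z \<and> Z \<inter> D m \<in> C"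
  shows "\<exists>Y\<in>C. \<forall>n\<ge>m. \<exists>Z. good n Z \<and> Z \<inter> D m = Y"
proof (rule ccontr)
  assume "\<not> ?thesis"
  then have "\<forall>Y\<in>C. \<exists>n\<ge>m. \<forall>Z. good n Z \<longrightarrow> Z \<inter> D m \<noteq> Y" by blast
  then obtain nf where nf: "\<And>Y. Y \<in> C \<Longrightarrow> nf Y \<ge> m \<and> (\<forall>Z. good (nf Y) Z \<longrightarrow> Z \<inter> D m \<noteq> Y)"
    by metis
  define N where "N = Max (insert m (nf ` C))"
  have N: "\<And>Y. Y \<in> C \<Longrightarrow> nf Y \<le> N" "m \<le> N" unfolding N_def using C by auto
  obtain Z where Z: "good N Z" "Z \<inter> D m \<in> C" using h N(2) by blast
  let ?Y = "Z \<inter> D m"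
  have "good (nf ?Y) (Z \<inter> D (nf ?Y))" using compD[OF N(1)[OF Z(2)] Z(1)] .
  moreover have "Z \<inter> D (nf ?Y) \<inter> D m = ?Y" using monoD[of m "nf ?Y"] nf[OF Z(2)] by blast
  ultimately show False using nf[OF Z(2)] by blast
qed

lemma ext0: "\<exists>Y. ext 0 Y"
proof -
  have h: "\<forall>n\<ge>0. \<exists>Z. good n Z \<and> Z \<inter> D 0 \<in> Pow (D 0)"
  proof (intro allI impI)
    fix n :: nat
    obtain Z where "good n Z" using ne by blast
    then show "\<exists>Z. good n Z \<and> Z \<inter> D 0 \<in> Pow (D 0)" by blast
  qed
  have "finite (Pow (D 0))" using fin[of 0] by simp
  from choose[OF this h] obtain Y where Y: "Y \<in> Pow (D 0)" and Yp: "\<forall>n\<ge>0. \<exists>Z. good n Z \<and> Z \<inter> D 0 = Y" ..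
  have "ext 0 Y" unfolding ext_def using Y Yp by simp
  then show ?thesis ..
qed

lemma ext_Suc:
  assumes "ext m Y"
  shows "\<exists>Y'. ext (Suc m) Y' \<and> Y' \<inter> D m = Y"
proof -
  let ?C = "{Y' \<in> Pow (D (Suc m)). Y' \<inter> D m = Y}"
  have fC: "finite ?C" using fin by simp
  have hC: "\<forall>n\<ge>Suc m. \<exists>Z. good n Z \<and> Z \<inter> D (Suc m) \<in> ?C"
  proof (intro allI impI)
    fix n assume n: "Suc m \<le> n"
    then obtain Z where "good n Z" "Z \<inter> D m = Y" using assms unfolding ext_def by (meson Suc_leD)
    moreover have "Z \<inter> D (Suc m) \<inter> D m = Z \<inter> D m" using mono[of m] by blast
    ultimately show "\<exists>Z. good n Z \<and> Z \<inter> D (Suc m) \<in> ?C" by blast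
  qed
  from choose[OF fC hC] obtain Y' where Y: "Y' \<in> ?C" and Yp: "\<forall>n\<ge>Suc m. \<exists>Z. good n Z \<and> Z \<inter> D (Suc m) = Y'" ..
  then have "ext (Suc m) Y'" unfolding ext_def by simp
  then show ?thesis using Y by blast
qed

lemma ext_good: "ext m Y \<Longrightarrow> good m Y"
proof -
  assume "ext m Y"
  then obtain Z where "good m Z" "Z \<inter> D m = Y" unfolding ext_def by blast
  moreover have "Z \<subseteq> D m" using sub[OF \<open>good m Z\<close>] .
  ultimately show "good m Y" by (simp add: Int_absorb2)
qed

theorem koenig: "\<exists>I. \<forall>m. good m (I \<inter> D m)"
proof -
  define f where "f = rec_nat (SOME Y. ext 0 Y) (\<lambda>m Y. SOME Y'. ext (Suc m) Y' \<and> Y' \<inter> D m = Y)"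
  have f0: "f 0 = (SOME Y. ext 0 Y)" and fS: "f (Suc m) = (SOME Y'. ext (Suc m) Y' \<and> Y' \<inter> D m = f m)" for m
    unfolding f_def by simp_all
  have step: "ext (Suc m) (SOME Y'. ext (Suc m) Y' \<and> Y' \<inter> D m = Y) \<and> (SOME Y'. ext (Suc m) Y' \<and> Y' \<inter> D m = Y) \<inter> D m = Y"
    if "ext m Y" for m Y by (rule someI_ex[OF ext_Suc[OF that]])
  have ef1: "ext m (f m)" for m
  proof (induction m)
    case 0
    show ?case unfolding f0 using ext0 by (rule someI_ex)
  next
    case (Suc m)
    show ?case unfolding fS using step[OF Suc] by blast
  qed
  have ef2: "f (Suc m) \<inter> D m = f m" for m
    unfolding fS using step[OF ef1[of m]] by blast
  have fsub: "f m \<subseteq> D m" for m using ef1[of m] unfolding ext_def by blast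
  have down: "m \<le> n \<Longrightarrow> f n \<inter> D m = f m" for m n
  proof (induction n rule: dec_induct)
    case base then show ?case using fsub[of m] by blast
  next
    case (step n)
    have "f (Suc n) \<inter> D m = f (Suc n) \<inter> D n \<inter> D m" using monoD[OF step.hyps(1)] by blast
    then show ?case using ef2[of n] step.IH by simp
  qed
  have up: "n \<le> m \<Longrightarrow> f n \<subseteq> f m" for m n using down[of n m] by blast
  have "(\<Union>n. f n) \<inter> D m = f m" for m
  proof
    show "(\<Union>n. f n) \<inter> D m \<subseteq> f m"
    proof
      fix x assume "x \<in> (\<Union>n. f n) \<inter> D m"
      then obtain n where x: "x \<in> f n" "x \<in> D m" by blast
      show "x \<in> f m"
      proof (cases "m \<le> n")
        case True then show ?thesis using down[OF True] x by blast
      next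
        case False then show ?thesis using up[of n m] x by auto
      qed
    qed
    show "f m \<subseteq> (\<Union>n. f n) \<inter> D m" using fsub[of m] by blast
  qed
  then show ?thesis using ext_good[OF ef1] by metis
qed

end



lemma fp_step_filter:
  assumes "fp_step G xs ys"
  shows "filter (\<lambda>l. P (fst l)) xs = filter (\<lambda>l. P (fst l)) ys \<or> fp_step G (filter (\<lambda>l. P (fst l)) xs) (filter (\<lambda>l. P (fst l)) ys)"
proof -
  from assms obtain u v n x y where xs: "xs = u @ [(n, x), (n, y)] @ v" and
    ys: "ys = (if x \<otimes>\<^bsub>G n\<^esub> y = \<one>\<^bsub>G n\<^esub> then u @ v else u @ [(n, x \<otimes>\<^bsub>G n\<^esub> y)] @ v)"
    unfolding fp_step_def by (auto split: if_splits)
  let ?f = "filter (\<lambda>l. P (fst l))"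
  show ?thesis
  proof (cases "P n")
    case True
    have "fp_step G (?f xs) (?f ys)"
      unfolding fp_step_def
      by (rule exI[of _ "?f u"], rule exI[of _ "?f v"], rule exI[of _ n], rule exI[of _ x], rule exI[of _ y])
        (use True xs ys in auto)
    then show ?thesis ..
  next
    case False
    then show ?thesis using xs ys by auto
  qed
qed

lemma fp_eq_filter:
  assumes "fp_eq G xs ys"
  shows "fp_eq G (filter (\<lambda>l. P (fst l)) xs) (filter (\<lambda>l. P (fst l)) ys)"
  using assms unfolding fp_eq_def
proof (induction rule: rtranclp_induct)
  case base then show ?case by simp
next
  case (step y z)
  from step.hyps(2) show ?case
  proof
    assume "fp_step G y z"
    from fp_step_filter[OF this, of P] show ?thesis
      using step.IH by (auto intro: rtranclp.rtrancl_into_rtrancl)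
  next
    assume "fp_step G z y"
    from fp_step_filter[OF this, of P] show ?thesis
      using step.IH by (auto intro: rtranclp.rtrancl_into_rtrancl)
  qed
qed

lemma invw_filter: "invw G (filter (\<lambda>l. P (fst l)) xs) = filter (\<lambda>l. P (fst l)) (invw G xs)"
  by (induction xs) (auto simp: invl_def)

lemma main_construction:
  fixes G :: "nat \<Rightarrow> 'a monoid"
  assumes grp: "\<And>n. group (G n)"
    and W: "is_iword G W" and k: "k > 0"
    and ew: "\<And>m. fp_eq G (wpow k (proj m W)) []"
  shows "\<exists>I. \<forall>m. (fp_eq G (invw G (proj m (I, snd W)) @ proj m W @ proj m (I, snd W)) [] \<or>
     (\<exists>i. \<exists>a\<in>carrier (G i). a \<noteq> \<one>\<^bsub>G i\<^esub> \<and> fp_eq G (invw G (proj m (I, snd W)) @ proj m W @ proj m (I, snd W)) [(i,a)]))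
     \<and> I \<subseteq> fst W"
proof -
  define Dm where "Dm m = {q \<in> fst W. fst (snd W q) \<le> m}" for m
  define wd where "wd X = map (snd W) (sorted_list_of_set X)" for X
  define c where "c m X = invw G (wd X) @ proj m W @ wd X" for m X
  define good where "good m X \<longleftrightarrow> X \<subseteq> Dm m \<and> (fp_eq G (c m X) [] \<or>
     (\<exists>i. \<exists>a\<in>carrier (G i). a \<noteq> \<one>\<^bsub>G i\<^esub> \<and> fp_eq G (c m X) [(i,a)]))" for m X
  have finD: "finite (Dm m)" for m unfolding Dm_def by (rule iword_fin_le[OF W])
  have projD: "proj m W = wd (Dm m)" for m unfolding proj_def wd_def Dm_def ..
  have c_filter: "c m (X \<inter> Dm m) = filter (\<lambda>l. fst l \<le> m) (c n X)" if mn: "m \<le> n" and X: "X \<subseteq> Dm n" for m n X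
  proof -
    have finX: "finite X" using X finD[of n] by (rule finite_subset)
    have "X \<inter> Dm m = {q \<in> X. fst (snd W q) \<le> m}" using X unfolding Dm_def by auto
    then have "wd (X \<inter> Dm m) = filter (\<lambda>l. fst l \<le> m) (wd X)"
      unfolding wd_def using sl_filter[OF finX, of "\<lambda>q. fst (snd W q) \<le> m"] by (simp add: filter_map comp_def)
    then show ?thesis unfolding c_def using proj_filter[OF W mn]
      by (simp add: invw_filter[of G "\<lambda>x. x \<le> m", symmetric])
  qed
  interpret kset Dm good
  proof
    show "finite (Dm m)" for m by (rule finD)
    show "Dm m \<subseteq> Dm (Suc m)" for m unfolding Dm_def by auto
    show "good m X \<Longrightarrow> X \<subseteq> Dm m" for m X unfolding good_def by simp
  next
    fix m
    obtain j where j: "j \<le> length (proj m W)" and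
      jj: "fp_eq G (invw G (take j (proj m W)) @ proj m W @ take j (proj m W)) [] \<or>
     (\<exists>i. \<exists>a\<in>carrier (G i). a \<noteq> \<one>\<^bsub>G i\<^esub> \<and> fp_eq G (invw G (take j (proj m W)) @ proj m W @ take j (proj m W)) [(i,a)])"
      using level_lemma[OF grp proj_VW[OF W] k ew[of m]] by blast
    let ?L = "sorted_list_of_set (Dm m)"
    let ?X = "set (take j ?L)"
    have "wd ?X = map (snd W) (take j ?L)" unfolding wd_def
      by (subst sl_set) (auto intro: sorted_wrt_take sl_sorted)
    also have "\<dots> = take j (proj m W)" unfolding projD wd_def by (simp add: take_map)
    finally have wX: "wd ?X = take j (proj m W)" .
    have "?X \<subseteq> Dm m" using finD[of m] by (auto dest: in_set_takeD)
    then have "good m ?X" unfolding good_def c_def wX using jj by blast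
    then show "\<exists>X. good m X" ..
  next
    fix m X assume g: "good (Suc m) X"
    then have X: "X \<subseteq> Dm (Suc m)" unfolding good_def by simp
    have cf: "c m (X \<inter> Dm m) = filter (\<lambda>l. fst l \<le> m) (c (Suc m) X)" by (rule c_filter[OF _ X]) simp
    have sub: "X \<inter> Dm m \<subseteq> Dm m" by simp
    from g have "fp_eq G (c (Suc m) X) [] \<or>
     (\<exists>i. \<exists>a\<in>carrier (G i). a \<noteq> \<one>\<^bsub>G i\<^esub> \<and> fp_eq G (c (Suc m) X) [(i,a)])" unfolding good_def by simp
    then show "good m (X \<inter> Dm m)"
    proof (elim disjE exE bexE conjE)
      assume "fp_eq G (c (Suc m) X) []"
      from fp_eq_filter[OF this, of "\<lambda>x. x \<le> m"] show ?thesis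
        unfolding good_def cf using sub by simp
    next
      fix i a assume a: "a \<in> carrier (G i)" "a \<noteq> \<one>\<^bsub>G i\<^esub>" "fp_eq G (c (Suc m) X) [(i,a)]"
      from fp_eq_filter[OF a(3), of "\<lambda>x. x \<le> m"] show ?thesis
        unfolding good_def cf using sub a by (cases "i \<le> m") auto
    qed
  qed
  obtain I where I: "\<forall>m. good m (I \<inter> Dm m)" using koenig by blast
  let ?I = "I \<inter> fst W"
  have "proj m (?I, snd W) = wd (I \<inter> Dm m)" for m
  proof -
    have "{q \<in> fst (?I, snd W). fst (snd (?I, snd W) q) \<le> m} = I \<inter> Dm m" unfolding Dm_def by auto
    then show ?thesis unfolding proj_def wd_def by simp
  qed
  then show ?thesis using I unfolding good_def c_def by (intro exI[of _ ?I]) auto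
qed



theorem lemma22:
  fixes G :: "nat \<Rightarrow> 'a monoid"
  assumes grp: "\<And>n. group (G n)"
    and g: "g \<in> carrier (topprod G)"
    and fin: "\<exists>k::nat. k > 0 \<and> g [^]\<^bsub>topprod G\<^esub> k = \<one>\<^bsub>topprod G\<^esub>"
  shows "\<exists>h \<in> carrier (topprod G). \<exists>i. \<exists>a \<in> carrier (G i).
           h \<otimes>\<^bsub>topprod G\<^esub> g \<otimes>\<^bsub>topprod G\<^esub> inv\<^bsub>topprod G\<^esub> h = factor_incl G i a"
proof -
  interpret T: group "topprod G" by (rule topprod_group[OF grp])
  obtain W where W: "is_iword G W" and gW: "g = cls G W" using g by (auto simp: carrier_topprod)
  obtain k :: nat where k: "k > 0" and gk: "g [^]\<^bsub>topprod G\<^esub> k = \<one>\<^bsub>topprod G\<^esub>" using fin by blast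
  obtain Wk where Wk: "is_iword G Wk" "cls G W [^]\<^bsub>topprod G\<^esub> k = cls G Wk"
    "\<forall>m. fp_eq G (proj m Wk) (wpow k (proj m W))"
    using pow_word[OF grp W] by blast
  have "cls G Wk = cls G empty_word" using Wk(2) gk gW by (simp add: one_topprod)
  then have "\<forall>m. fp_eq G (proj m Wk) []" using cls_eq[OF Wk(1) is_iword_empty] by simp
  then have ew: "fp_eq G (wpow k (proj m W)) []" for m
    using Wk(3) by (meson fp_eq_iff_trans)
  obtain I where I: "\<forall>m. (fp_eq G (invw G (proj m (I, snd W)) @ proj m W @ proj m (I, snd W)) [] \<or>
     (\<exists>i. \<exists>a\<in>carrier (G i). a \<noteq> \<one>\<^bsub>G i\<^esub> \<and> fp_eq G (invw G (proj m (I, snd W)) @ proj m W @ proj m (I, snd W)) [(i,a)]))"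
    and IW: "I \<subseteq> fst W"
    using main_construction[OF grp W k ew] by blast
  define P where "P = (I, snd W)"
  have iP: "is_iword G P" unfolding P_def by (rule is_iword_restr[OF W IW])
  have iiP: "is_iword G (invword G P)" by (rule is_iword_invword[OF grp iP])
  define h where "h = cls G (invword G P)"
  have hc: "h \<in> carrier (topprod G)" unfolding h_def carrier_topprod using iiP by blast
  have Pc: "cls G P \<in> carrier (topprod G)" unfolding carrier_topprod using iP by blast
  have e1': "is_iword G (concat_word P (invword G P))" by (rule is_iword_concat[OF iP iiP])
  have "cls G P \<otimes>\<^bsub>topprod G\<^esub> h = \<one>\<^bsub>topprod G\<^esub>"
    unfolding h_def one_topprod mult_cls[OF iP iiP] cls_eq[OF e1' is_iword_empty]
      proj_concat[OF iP iiP] proj_invword[OF iP]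
    using cancel_r[OF grp proj_VW[OF iP]] by simp
  then have invh: "inv\<^bsub>topprod G\<^esub> h = cls G P" using T.inv_equality hc Pc by blast
  define Cw where "Cw = concat_word (concat_word (invword G P) W) P"
  have iC1: "is_iword G (concat_word (invword G P) W)" by (rule is_iword_concat[OF iiP W])
  have iC: "is_iword G Cw" unfolding Cw_def by (rule is_iword_concat[OF iC1 iP])
  have conj: "h \<otimes>\<^bsub>topprod G\<^esub> g \<otimes>\<^bsub>topprod G\<^esub> inv\<^bsub>topprod G\<^esub> h = cls G Cw"
    unfolding invh unfolding h_def gW Cw_def mult_cls[OF iiP W] mult_cls[OF iC1 iP] ..
  define cm where "cm m = proj m Cw" for m
  have cm_def': "cm m = invw G (proj m P) @ proj m W @ proj m P" for m
    unfolding cm_def Cw_def proj_concat[OF iC1 iP] proj_concat[OF iiP W] proj_invword[OF iP] by simp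
  have good: "fp_eq G (cm m) [] \<or> (\<exists>i. \<exists>a\<in>carrier (G i). a \<noteq> \<one>\<^bsub>G i\<^esub> \<and> fp_eq G (cm m) [(i,a)])" for m
    using I unfolding cm_def' P_def by blast
  have cfil: "cm m = filter (\<lambda>l. fst l \<le> m) (cm n)" if "m \<le> n" for m n
    unfolding cm_def' proj_filter[OF W that] proj_filter[OF iP that]
    by (simp add: invw_filter[of G "\<lambda>x. x \<le> m", symmetric])
  show ?thesis
  proof (cases "\<forall>m. fp_eq G (cm m) []")
    case True
    have "cls G Cw = cls G empty_word"
      unfolding cls_eq[OF iC is_iword_empty] using True unfolding cm_def by simp
    then have "h \<otimes>\<^bsub>topprod G\<^esub> g \<otimes>\<^bsub>topprod G\<^esub> inv\<^bsub>topprod G\<^esub> h = factor_incl G 0 \<one>\<^bsub>G 0\<^esub>"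
      unfolding conj factor_incl_def by (simp add: one_topprod)
    moreover have "\<one>\<^bsub>G 0\<^esub> \<in> carrier (G 0)" using group.is_monoid[OF grp] monoid.one_closed by blast
    ultimately show ?thesis using hc by blast
  next
    case False
    define m0 where "m0 = (LEAST m. \<not> fp_eq G (cm m) [])"
    have nm0: "\<not> fp_eq G (cm m0) []" unfolding m0_def using False by (metis LeastI)
    have bm0: "m < m0 \<Longrightarrow> fp_eq G (cm m) []" for m unfolding m0_def using not_less_Least by blast
    obtain i a where a: "a \<in> carrier (G i)" "a \<noteq> \<one>\<^bsub>G i\<^esub>" "fp_eq G (cm m0) [(i,a)]"
      using good[of m0] nm0 by blast
    have filt: "fp_eq G (cm m) (filter (\<lambda>l. fst l \<le> m) xs)" if "m \<le> n" "fp_eq G (cm n) xs" for m n xs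
      using fp_eq_filter[OF that(2), of "\<lambda>x. x \<le> m"] cfil[OF that(1)] by simp
    have im0: "i \<le> m0"
    proof (rule ccontr)
      assume "\<not> i \<le> m0"
      then have "fp_eq G (cm m0) []" using filt[OF order_refl a(3)] by simp
      then show False using nm0 by simp
    qed
    have all: "fp_eq G (cm m) (proj m (lword i a))" for m
    proof (cases "m0 \<le> m")
      case True
      have "\<not> fp_eq G (cm m) []"
      proof
        assume "fp_eq G (cm m) []"
        then have "fp_eq G (cm m0) []" using filt[OF True, of "[]"] by simp
        then show False using nm0 by simp
      qed
      then obtain i' a' where a': "fp_eq G (cm m) [(i',a')]" using good[of m] by blast
      have f: "fp_eq G (cm m0) (filter (\<lambda>l. fst l \<le> m0) [(i',a')])" by (rule filt[OF True a'])
      have "i' \<le> m0"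
      proof (rule ccontr)
        assume "\<not> i' \<le> m0"
        then show False using f nm0 by simp
      qed
      then have "fp_eq G (cm m0) [(i',a')]" using f by simp
      then have "fp_eq G (cm m) [(i,a)]" using a' a(3) by (meson fp_eq_iff_trans)
      then show ?thesis using im0 True by (simp add: proj_lword)
    next
      case False
      then have m: "m < m0" by simp
      show ?thesis
      proof (cases "i \<le> m")
        case True
        have "fp_eq G (cm m) [(i,a)]" using filt[of m m0, OF _ a(3)] m True by simp
        then show ?thesis using True by (simp add: proj_lword)
      next
        case False
        then show ?thesis using bm0[OF m] by (simp add: proj_lword)
      qed
    qed
    have il: "is_iword G (lword i a)" using a by (intro is_iword_lword) (simp add: is_letter_def)
    have "cls G Cw = cls G (lword i a)"
      unfolding cls_eq[OF iC il] using all unfolding cm_def by simp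
    then have "h \<otimes>\<^bsub>topprod G\<^esub> g \<otimes>\<^bsub>topprod G\<^esub> inv\<^bsub>topprod G\<^esub> h = factor_incl G i a"
      unfolding conj factor_incl_def using a(2) by (simp add: lword_def)
    then show ?thesis using hc a(1) by blast
  qed
qed


end
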